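(* Let $\nu\in\mathcal{P}_2(\mathbb{R}^2)$, $\gamma\in\Gamma(\nu)$, $\mu$ its $x$-marginal, and $G\in\mathfrak{M}$ such that $$\int c(x,y)\,d\gamma\le\int\phi_G(y)\,d\nu.$$ Then equality holds in this inequality, $\gamma$ is an optimal plan (a minimizer of $\int c\,d\zeta$ over $\zeta\in\Gamma(\nu)$), $G\supset\operatorname{supp}\mu$, and $$c(x,y)=\phi_G(y)=\min_{r\in G}c(r,y),\qquad(x,y)\in\operatorname{supp}\gamma.$$
   Context: $c(x,y)=(x_1-y_1)(x_2-y_2)$ for $x,y\in\mathbb{R}^2$. $\mathcal{P}_2(\mathbb{R}^d)$: Borel probability measures with finite second moment. $\Gamma(\nu)$: the set of $\gamma\in\mathcal{P}_2(\mathbb{R}^2\times\mathbb{R}^2)$ (points $(x,y)$) with $y$-marginal $\nu$ and $\gamma(y|x)=x$ (conditional expectation of $y$ given $x$ equals $x$, $\gamma$-a.s.). $\mathfrak{M}$: family of maximal monotone sets in $\mathbb{R}^2$ (monotone: $c(r,s)\ge0$ for all $r,s\in G$; maximal: not a proper subset of a monotone set). $\phi_G(y)=\inf_{x\in G}c(x,y)$. $\operatorname{supp}$ is the support. *)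

theory Defs
  imports "HOL-Probability.Probability"
begin

type_synonym pt = "real \<times> real"

definition cost :: "pt \<Rightarrow> pt \<Rightarrow> real" where
  "cost x y = (fst x - fst y) * (snd x - snd y)"

definition P2 :: "'a::euclidean_space measure \<Rightarrow> bool" where
  "P2 M \<longleftrightarrow> prob_space M \<and> sets M = sets borel \<and> integrable M (\<lambda>z. (norm z)\<^sup>2)"

text \<open>Gamma(nu): martingale couplings with second marginal nu. The condition
  E[y | x] = x is expressed by its defining property: for every Borel set A,
  the integral of 1_A(x) (y - x) vanishes.\<close>
definition Gamma :: "pt measure \<Rightarrow> (pt \<times> pt) measure set" where
  "Gamma \<nu> = {\<gamma>. P2 \<gamma> \<and> distr \<gamma> borel snd = \<nu> \<and>
      (\<forall>A \<in> sets (borel :: pt measure).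
         (\<integral>z. indicator A (fst z) *\<^sub>R (snd z - fst z) \<partial>\<gamma>) = 0)}"

definition monotone_set :: "pt set \<Rightarrow> bool" where
  "monotone_set G \<longleftrightarrow> (\<forall>r\<in>G. \<forall>s\<in>G. cost r s \<ge> 0)"

definition maximal_monotone :: "pt set \<Rightarrow> bool" where
  "maximal_monotone G \<longleftrightarrow> monotone_set G \<and>
     (\<forall>H. monotone_set H \<and> G \<subseteq> H \<longrightarrow> H = G)"

definition phi :: "pt set \<Rightarrow> pt \<Rightarrow> ereal" where
  "phi G y = (INF x\<in>G. ereal (cost x y))"

definition ext_integral :: "'a measure \<Rightarrow> ('a \<Rightarrow> ereal) \<Rightarrow> ereal" where
  "ext_integral M f =
     enn2ereal (\<integral>\<^sup>+x. e2ennreal (f x) \<partial>M) - enn2ereal (\<integral>\<^sup>+x. e2ennreal (- f x) \<partial>M)"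

definition msupport :: "'a::topological_space measure \<Rightarrow> 'a set" where
  "msupport M = {x. \<forall>U. open U \<and> x \<in> U \<longrightarrow> emeasure M U > 0}"

end

theory Submission
  imports Defs
begin

lemma cost_uv: "cost r s = (((fst r + snd r) - (fst s + snd s))^2 - ((snd r - fst r) - (snd s - fst s))^2) / 4"
  unfolding cost_def by (simp add: power2_eq_square algebra_simps)

lemma cost_sym: "cost r s = cost s r"
  unfolding cost_def by (simp add: algebra_simps)

lemma mono_lip:
  assumes "monotone_set G" "r \<in> G" "s \<in> G"
  shows "\<bar>(snd r - fst r) - (snd s - fst s)\<bar> \<le> \<bar>(fst r + snd r) - (fst s + snd s)\<bar>"
proof -
  have "cost r s \<ge> 0" using assms unfolding monotone_set_def by auto
  hence "((snd r - fst r) - (snd s - fst s))^2 \<le> ((fst r + snd r) - (fst s + snd s))^2"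
    unfolding cost_uv by simp
  thus ?thesis using abs_le_square_iff by blast
qed

lemma maxmono_nonempty: assumes "maximal_monotone G" shows "G \<noteq> {}"
proof
  assume "G = {}"
  have "monotone_set {(0,0)}" unfolding monotone_set_def cost_def by simp
  with assms \<open>G = {}\<close> show False unfolding maximal_monotone_def by blast
qed

lemma maxmono_exists:
  assumes "maximal_monotone G"
  shows "\<exists>p\<in>G. fst p + snd p = t"
proof -
  have mono: "monotone_set G" using assms unfolding maximal_monotone_def by auto
  obtain p0 where p0: "p0 \<in> G" using maxmono_nonempty[OF assms] by auto
  define L where "L = (\<lambda>p. (snd p - fst p) - \<bar>t - (fst p + snd p)\<bar>) ` G"
  have ub: "l \<le> (snd p - fst p) + \<bar>t - (fst p + snd p)\<bar>" if "l \<in> L" "p \<in> G" for l p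
  proof -
    from that(1) obtain q where q: "q \<in> G" "l = (snd q - fst q) - \<bar>t - (fst q + snd q)\<bar>" unfolding L_def by blast
    have "\<bar>(snd q - fst q) - (snd p - fst p)\<bar> \<le> \<bar>(fst q + snd q) - (fst p + snd p)\<bar>"
      using mono_lip[OF mono q(1) that(2)] .
    thus ?thesis using q(2) by linarith
  qed
  have bdd: "bdd_above L" using ub p0 unfolding bdd_above_def by blast
  have ne: "L \<noteq> {}" using p0 L_def by auto
  define w where "w = Sup L"
  have w1: "(snd p - fst p) - \<bar>t - (fst p + snd p)\<bar> \<le> w" if "p \<in> G" for p
    unfolding w_def using that bdd L_def by (auto intro!: cSup_upper)
  have w2: "w \<le> (snd p - fst p) + \<bar>t - (fst p + snd p)\<bar>" if "p \<in> G" for p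
    unfolding w_def using that ne ub by (auto intro!: cSup_least)
  define q where "q = ((t - w)/2, (t + w)/2)"
  have qu: "fst q + snd q = t" and qv: "snd q - fst q = w" unfolding q_def by (simp_all add: field_simps)
  have cq: "cost q p \<ge> 0" if "p \<in> G" for p
  proof -
    have "\<bar>w - (snd p - fst p)\<bar> \<le> \<bar>t - (fst p + snd p)\<bar>" using w1[OF that] w2[OF that] by linarith
    hence "(w - (snd p - fst p))^2 \<le> (t - (fst p + snd p))^2" using abs_le_square_iff by blast
    thus ?thesis unfolding cost_uv qu qv by simp
  qed
  have "monotone_set (insert q G)"
    unfolding monotone_set_def
  proof (intro ballI)
    fix r s assume "r \<in> insert q G" "s \<in> insert q G"
    then show "cost r s \<ge> 0"
    proof (elim insertE)
      assume "r = q" "s = q" thus ?thesis by (simp add: cost_def)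
    next
      assume "r = q" "s \<in> G" thus ?thesis using cq by simp
    next
      assume "r \<in> G" "s = q" thus ?thesis using cq cost_sym by metis
    next
      assume "r \<in> G" "s \<in> G" thus ?thesis using mono unfolding monotone_set_def by auto
    qed
  qed
  hence "insert q G = G" using assms unfolding maximal_monotone_def by blast
  hence "q \<in> G" by blast
  thus ?thesis using qu by blast
qed

lemma maxmono_unique:
  assumes "monotone_set G" "p \<in> G" "q \<in> G" "fst p + snd p = fst q + snd q"
  shows "p = q"
proof -
  have "\<bar>(snd p - fst p) - (snd q - fst q)\<bar> \<le> 0" using mono_lip[OF assms(1-3)] assms(4) by simp
  hence "snd p - fst p = snd q - fst q" by simp
  with assms(4) show ?thesis by (simp add: prod_eq_iff) 
qed

lemma maxmono_struct:
  assumes "maximal_monotone G"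
  obtains f :: "real \<Rightarrow> real" where "1-lipschitz_on UNIV f"
    "G = {p. snd p - fst p = f (fst p + snd p)}"
proof -
  have mono: "monotone_set G" using assms unfolding maximal_monotone_def by auto
  define P where "P t = (SOME p. p \<in> G \<and> fst p + snd p = t)" for t
  have P: "P t \<in> G \<and> fst (P t) + snd (P t) = t" for t
  proof -
    have "\<exists>p. p \<in> G \<and> fst p + snd p = t" using maxmono_exists[OF assms, of t] by blast
    from someI_ex[OF this] show ?thesis unfolding P_def .
  qed
  define f where "f t = snd (P t) - fst (P t)" for t
  have "1-lipschitz_on UNIV f"
    unfolding lipschitz_on_def dist_real_def f_def
    using mono_lip[OF mono] P by (metis mult_1 order.refl zero_le_one)
  moreover have "G = {p. snd p - fst p = f (fst p + snd p)}"
  proof safe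
    fix p assume "p \<in> G"
    hence "P (fst p + snd p) = p" using maxmono_unique[OF mono] P by metis
    thus "snd p - fst p = f (fst p + snd p)" unfolding f_def by simp
  next
    fix a b assume h: "snd (a,b) - fst (a,b) = f (fst (a,b) + snd (a,b))"
    have "P (a + b) = (a, b)" using P[of "a+b"] h unfolding f_def by (simp add: prod_eq_iff) 
    thus "(a,b) \<in> G" using P by metis
  qed
  ultimately show ?thesis using that by blast
qed

definition dlt :: "(real \<Rightarrow> real) \<Rightarrow> pt \<Rightarrow> real" where
  "dlt f x = (f (fst x + snd x) - (snd x - fst x)) / 2"

definition rr :: "(real \<Rightarrow> real) \<Rightarrow> pt \<Rightarrow> pt" where
  "rr f x = (fst x - dlt f x, snd x + dlt f x)"

definition mm :: "pt \<times> pt \<Rightarrow> real" where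
  "mm z = (snd (snd z) - snd (fst z)) - (fst (snd z) - fst (fst z))"

lemma lip_cont: "1-lipschitz_on UNIV f \<Longrightarrow> continuous_on UNIV f"
  using lipschitz_on_continuous_on by blast

lemma dlt_cont: assumes "1-lipschitz_on UNIV f" shows "continuous_on UNIV (dlt f)"
proof -
  have "continuous_on UNIV (\<lambda>x::pt. fst x + snd x)" by (intro continuous_intros)
  hence "continuous_on UNIV (\<lambda>x::pt. f (fst x + snd x))"
    using continuous_on_compose2[OF lip_cont[OF assms], of UNIV "\<lambda>x::pt. fst x + snd x"]
    by (auto intro!: continuous_intros)
  thus ?thesis unfolding dlt_def by (auto intro!: continuous_intros)
qed

lemma G_dlt: "G = {p. snd p - fst p = f (fst p + snd p)} \<Longrightarrow> G = {p. dlt f p = 0}"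
  unfolding dlt_def by auto

lemma rr_in: "G = {p. snd p - fst p = f (fst p + snd p)} \<Longrightarrow> rr f x \<in> G"
  unfolding rr_def dlt_def by auto

lemma cost_rr: "cost (rr f x) y = cost x y - (dlt f x)^2 + dlt f x * mm (x, y)"
  unfolding rr_def cost_def mm_def by (simp add: power2_eq_square algebra_simps)

lemma dlt_bound: assumes "1-lipschitz_on UNIV f"
  shows "\<bar>dlt f x\<bar> \<le> \<bar>f 0\<bar> + \<bar>fst x\<bar> + \<bar>snd x\<bar>"
proof -
  have "dist (f (fst x + snd x)) (f 0) \<le> 1 * dist (fst x + snd x) 0"
    using assms unfolding lipschitz_on_def by blast
  hence "\<bar>f (fst x + snd x)\<bar> \<le> \<bar>f 0\<bar> + \<bar>fst x + snd x\<bar>" by (simp add: dist_real_def)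
  moreover have "\<bar>f (fst x + snd x) - (snd x - fst x)\<bar> \<le> \<bar>f (fst x + snd x)\<bar> + \<bar>snd x - fst x\<bar>" by (rule abs_triangle_ineq4)
  moreover have "\<bar>fst x + snd x\<bar> \<le> \<bar>fst x\<bar> + \<bar>snd x\<bar>" by (rule abs_triangle_ineq)
  moreover have "\<bar>snd x - fst x\<bar> \<le> \<bar>fst x\<bar> + \<bar>snd x\<bar>" by (rule order.trans[OF abs_triangle_ineq4]) simp
  moreover have "\<bar>f 0\<bar> \<ge> 0" by simp
  ultimately have h2: "\<bar>f (fst x + snd x) - (snd x - fst x)\<bar> \<le> 2*(\<bar>f 0\<bar> + \<bar>fst x\<bar> + \<bar>snd x\<bar>)" by (smt (verit))
  show ?thesis unfolding dlt_def using h2 by (simp add: abs_divide)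
qed

lemma INF_rat:
  fixes F :: "real \<Rightarrow> real"
  assumes "continuous_on UNIV F"
  shows "(INF t. ereal (F t)) = (INF t\<in>\<rat>. ereal (F t))"
proof (rule antisym)
  show "(INF t. ereal (F t)) \<le> (INF t\<in>\<rat>. ereal (F t))" by (rule INF_superset_mono) auto
next
  define a where "a = (INF t\<in>\<rat>. ereal (F t))"
  have "a \<le> ereal (F t)" for t
  proof (cases a)
    case (real b)
    have "closed {t. b \<le> F t}" using assms by (intro closed_Collect_le) (auto intro: continuous_intros)
    moreover have "\<rat> \<subseteq> {t. b \<le> F t}"
    proof
      fix q :: real assume "q \<in> \<rat>"
      hence "a \<le> ereal (F q)" unfolding a_def by (rule INF_lower)
      thus "q \<in> {t. b \<le> F t}" using real by simp
    qed
    ultimately have "closure \<rat> \<subseteq> {t. b \<le> F t}" by (rule closure_minimal[rotated])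
    thus ?thesis using real Rats_closure_real by auto
  next
    case PInf
    have "a \<le> ereal (F 0)" unfolding a_def by (rule INF_lower) simp
    thus ?thesis using PInf by simp
  qed simp
  thus "a \<le> (INF t. ereal (F t))" by (simp add: le_INF_iff)
qed

lemma cost_meas[measurable]: "(\<lambda>y. cost x y) \<in> borel_measurable borel"
  by (rule borel_measurable_continuous_onI) (unfold cost_def, intro continuous_intros)

lemma phi_meas:
  assumes lip: "1-lipschitz_on UNIV f" and G: "G = {p. snd p - fst p = f (fst p + snd p)}"
  shows "phi G \<in> borel_measurable borel"
proof -
  define Pf where "Pf t = ((t - f t)/2, (t + f t)/2)" for t
  have "G = range Pf"
  proof (rule set_eqI, rule iffI)
    fix p assume "p \<in> G"
    hence "p = Pf (fst p + snd p)" using G unfolding Pf_def by (auto simp: field_simps prod_eq_iff)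
    thus "p \<in> range Pf" by blast
  next
    fix p assume "p \<in> range Pf"
    then obtain t where "p = Pf t" by blast
    thus "p \<in> G" using G unfolding Pf_def by (auto simp: field_simps)
  qed
  hence eq: "phi G y = (INF t. ereal (cost (Pf t) y))" for y
    unfolding phi_def by (simp add: image_comp)
  have "continuous_on UNIV (\<lambda>t. cost (Pf t) y)" for y
    using lip_cont[OF lip] unfolding Pf_def cost_def by (auto intro!: continuous_intros)
  hence eq2: "phi G y = (INF t\<in>\<rat>. ereal (cost (Pf t) y))" for y
    using eq INF_rat by metis
  show ?thesis unfolding eq2
    by (rule borel_measurable_INF) (auto simp: countable_rat)
qed

lemma P2_int:
  fixes M :: "'a::euclidean_space measure" and g :: "'a \<Rightarrow> 'b::{banach,second_countable_topology}"
  assumes "P2 M" "g \<in> borel_measurable borel" "\<And>z. norm (g z) \<le> K * (1 + (norm z)^2)"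
  shows "integrable M g"
proof -
  have P: "prob_space M" and S: "sets M = sets borel" and I: "integrable M (\<lambda>z. (norm z)^2)"
    using assms(1) unfolding P2_def by auto
  have "integrable M (\<lambda>z. K * (1 + (norm z)^2))"
  proof -
    have "integrable M (\<lambda>z. 1 + (norm z)^2)"
      by (rule Bochner_Integration.integrable_add[OF finite_measure.integrable_const[OF prob_space.finite_measure[OF P]] I])
    thus ?thesis by (rule Bochner_Integration.integrable_mult_right)
  qed
  moreover have "g \<in> borel_measurable M" using assms(2) by (subst measurable_cong_sets[OF S refl])
  moreover have "AE z in M. norm (g z) \<le> norm (K * (1 + (norm z)^2))"
  proof (intro AE_I2)
    fix z :: 'a
    have "K * (1 + (norm z)^2) \<le> norm (K * (1 + (norm z)^2))" unfolding real_norm_def by (rule abs_ge_self)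
    thus "norm (g z) \<le> norm (K * (1 + (norm z)^2))" using assms(3)[of z] by linarith
  qed
  ultimately show ?thesis by (rule Bochner_Integration.integrable_bound)
qed

lemma prod_bound:
  fixes p q a b c d N :: real
  assumes "\<bar>p\<bar> \<le> a + b*N" "\<bar>q\<bar> \<le> c + d*N" "a \<ge> 0" "b \<ge> 0" "c \<ge> 0" "d \<ge> 0" "N \<ge> 0"
  shows "\<bar>p*q\<bar> \<le> (a+b)*(c+d)*(1 + N^2)"
proof -
  have "\<bar>p*q\<bar> \<le> (a + b*N)*(c + d*N)" unfolding abs_mult
    using assms by (intro mult_mono) auto
  also have "\<dots> = a*c + (a*d+b*c)*N + b*d*N^2" by (simp add: algebra_simps power2_eq_square)
  also have "\<dots> \<le> a*c*(1+N^2) + (a*d+b*c)*(1+N^2) + b*d*(1+N^2)"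
  proof -
    have "0 \<le> (N - 1)^2" by simp
    hence "0 \<le> N^2 - 2*N + 1" by (simp add: power2_diff)
    hence N1: "N \<le> 1 + N^2" using assms(7) by linarith
    have "a*c \<le> a*c*(1+N^2)" using assms by (simp add: algebra_simps)
    moreover have "(a*d+b*c)*N \<le> (a*d+b*c)*(1+N^2)" using N1 assms by (intro mult_left_mono) auto
    moreover have "b*d*N^2 \<le> b*d*(1+N^2)" using assms by (intro mult_left_mono) auto
    ultimately show ?thesis by linarith
  qed
  also have "\<dots> = (a+b)*(c+d)*(1 + N^2)" by (simp add: algebra_simps)
  finally show ?thesis .
qed

lemma comp_le:
  fixes z :: "pt \<times> pt"
  shows "\<bar>fst (fst z)\<bar> \<le> norm z" "\<bar>snd (fst z)\<bar> \<le> norm z" "\<bar>fst (snd z)\<bar> \<le> norm z" "\<bar>snd (snd z)\<bar> \<le> norm z"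
    "norm (fst z) \<le> norm z" "norm (snd z) \<le> norm z"
proof -
  obtain a b c d where z: "z = ((a,b),(c,d))" by (metis prod.collapse)
  show "norm (fst z) \<le> norm z" "norm (snd z) \<le> norm z" unfolding z by (simp_all only: fst_conv snd_conv norm_fst_le norm_snd_le)
  have h: "\<bar>a\<bar> \<le> norm (a,b)" "\<bar>b\<bar> \<le> norm (a,b)" "\<bar>c\<bar> \<le> norm (c,d)" "\<bar>d\<bar> \<le> norm (c,d)"
    by (metis norm_fst_le real_norm_def, metis norm_snd_le real_norm_def,
        metis norm_fst_le real_norm_def, metis norm_snd_le real_norm_def)
  have h2: "norm (a,b) \<le> norm z" "norm (c,d) \<le> norm z" unfolding z by (rule norm_fst_le, rule norm_snd_le)
  show "\<bar>fst (fst z)\<bar> \<le> norm z" "\<bar>snd (fst z)\<bar> \<le> norm z" "\<bar>fst (snd z)\<bar> \<le> norm z" "\<bar>snd (snd z)\<bar> \<le> norm z"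
    using h h2 unfolding z by auto
qed

lemma N_le: "(x::real) \<le> 1 + x^2"
proof -
  have "0 \<le> (x - 1)^2" by simp
  hence "0 \<le> x^2 - 2*x + 1" by (simp add: power2_diff)
  thus ?thesis using zero_le_power2[of x] by linarith
qed

lemma mm_bound: "\<bar>mm z\<bar> \<le> 0 + 4 * norm z"
  using comp_le[of z] unfolding mm_def by linarith

lemma cont_meas: "continuous_on UNIV g \<Longrightarrow> g \<in> borel_measurable borel"
  by (rule borel_measurable_continuous_onI)

lemma mm_cont: "continuous_on UNIV mm"
  unfolding mm_def by (intro continuous_intros)

lemma mm_meas[measurable]: "mm \<in> borel_measurable borel"
  by (rule cont_meas[OF mm_cont])

lemma fst_meas: "(fst :: pt \<times> pt \<Rightarrow> pt) \<in> borel \<rightarrow>\<^sub>M borel"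
  by (rule borel_measurable_continuous_onI) (intro continuous_intros)

lemma snd_meas: "(snd :: pt \<times> pt \<Rightarrow> pt) \<in> borel \<rightarrow>\<^sub>M borel"
  by (rule borel_measurable_continuous_onI) (intro continuous_intros)

lemma Gamma_D:
  assumes "\<zeta> \<in> Gamma \<nu>"
  shows "P2 \<zeta>" "prob_space \<zeta>" "sets \<zeta> = sets borel" "space \<zeta> = UNIV" "distr \<zeta> borel snd = \<nu>"
    "\<And>A. A \<in> sets borel \<Longrightarrow> (\<integral>z. indicator A (fst z) *\<^sub>R (snd z - fst z) \<partial>\<zeta>) = 0"
  using assms unfolding Gamma_def P2_def by (auto dest: sets_eq_imp_space_eq)

lemma meas_cong: "sets \<zeta> = sets borel \<Longrightarrow> g \<in> M \<rightarrow>\<^sub>M N \<Longrightarrow> sets M = sets borel \<Longrightarrow> g \<in> \<zeta> \<rightarrow>\<^sub>M N"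
  by (subst measurable_cong_sets[of \<zeta> M N N]) auto

lemma mart:
  assumes Z: "\<zeta> \<in> Gamma \<nu>" and h: "h \<in> borel_measurable borel"
    and hi: "integrable \<zeta> (\<lambda>z. h (fst z) * mm z)"
  shows "(\<integral>z. h (fst z) * mm z \<partial>\<zeta>) = 0"
proof -
  note GD = Gamma_D[OF Z]
  have S: "sets \<zeta> = sets borel" and sp: "space \<zeta> = UNIV" using GD by auto
  have mfst: "(fst :: pt \<times> pt \<Rightarrow> pt) \<in> \<zeta> \<rightarrow>\<^sub>M borel" by (subst measurable_cong_sets[OF S refl]) (rule fst_meas)
  have hfst: "(\<lambda>z. h (fst z)) \<in> borel_measurable \<zeta>" using measurable_comp[OF mfst h] by (simp add: comp_def)
  have mmM: "mm \<in> borel_measurable \<zeta>" by (rule meas_cong[OF S mm_meas]) simp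
  have ind0: "(\<integral>z. indicator A (fst z) * mm z \<partial>\<zeta>) = 0" if A: "A \<in> sets borel" for A
  proof -
    define V where "V z = indicator A (fst z) *\<^sub>R (snd z - fst z)" for z :: "pt \<times> pt"
    have Vm: "V \<in> borel_measurable borel" unfolding V_def
      using A fst_meas snd_meas by measurable
    have "norm (V z) \<le> 2 * (1 + (norm z)^2)" for z
    proof -
      have "norm (V z) \<le> norm (snd z - fst z)" unfolding V_def by (simp add: indicator_def)
      also have "\<dots> \<le> norm (snd z) + norm (fst z)" by (rule norm_triangle_ineq4)
      also have "\<dots> \<le> 0 + 2 * norm z" using comp_le[of z] by simp
      also have "\<dots> \<le> 2 * (1 + (norm z)^2)" using N_le[of "norm z"] by simp
      finally show ?thesis .
    qed
    hence "integrable \<zeta> V" using P2_int[OF GD(1) Vm] by blast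
    moreover have "integral\<^sup>L \<zeta> V = 0" unfolding V_def using GD(6)[OF A] .
    ultimately have HB: "has_bochner_integral \<zeta> V 0" by (simp add: has_bochner_integral_iff)
    have "has_bochner_integral \<zeta> (\<lambda>z. snd (V z) - fst (V z)) 0"
      using has_bochner_integral_diff[OF has_bochner_integral_snd[OF HB] has_bochner_integral_fst[OF HB]] by simp
    moreover have "(\<lambda>z. snd (V z) - fst (V z)) = (\<lambda>z. indicator A (fst z) * mm z)"
      unfolding V_def mm_def by (auto simp: algebra_simps)
    ultimately show ?thesis using has_bochner_integral_integral_eq by fastforce
  qed
  define mp where "mp z = max 0 (mm z)" for z
  define mn where "mn z = max 0 (- mm z)" for z
  have mpm: "mp \<in> borel_measurable \<zeta>" "mn \<in> borel_measurable \<zeta>" unfolding mp_def mn_def using mmM by auto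
  have ii: "integrable \<zeta> (\<lambda>z. indicator A (fst z) * mp z)" "integrable \<zeta> (\<lambda>z. indicator A (fst z) * mn z)"
    if A: "A \<in> sets borel" for A
  proof -
    have m1: "(\<lambda>z. indicator A (fst z) * mp z) \<in> borel_measurable borel"
      "(\<lambda>z. indicator A (fst z) * mn z) \<in> borel_measurable borel"
      unfolding mp_def mn_def using A fst_meas by measurable
    have b: "\<bar>indicator A (fst z) * mp z\<bar> \<le> 4 * (1 + (norm z)^2)" "\<bar>indicator A (fst z) * mn z\<bar> \<le> 4 * (1 + (norm z)^2)" for z
    proof -
      have i1: "\<bar>indicator A (fst z) :: real\<bar> \<le> 1 + 0 * norm z" by (simp add: indicator_def)
      have "\<bar>mp z\<bar> \<le> 0 + 4 * norm z" "\<bar>mn z\<bar> \<le> 0 + 4 * norm z" using mm_bound[of z] unfolding mp_def mn_def by auto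
      thus "\<bar>indicator A (fst z) * mp z\<bar> \<le> 4 * (1 + (norm z)^2)" "\<bar>indicator A (fst z) * mn z\<bar> \<le> 4 * (1 + (norm z)^2)"
        using prod_bound[OF i1] by force+
    qed
    thus "integrable \<zeta> (\<lambda>z. indicator A (fst z) * mp z)" "integrable \<zeta> (\<lambda>z. indicator A (fst z) * mn z)"
      using P2_int[OF GD(1) m1(1) b(1)[folded real_norm_def]] P2_int[OF GD(1) m1(2) b(2)[folded real_norm_def]] by auto
  qed
  define M1 where "M1 = distr (density \<zeta> (\<lambda>z. ennreal (mp z))) borel fst"
  define M2 where "M2 = distr (density \<zeta> (\<lambda>z. ennreal (mn z))) borel fst"
  have em: "emeasure (distr (density \<zeta> (\<lambda>z. ennreal (g z))) borel fst) A = ennreal (\<integral>z. indicator A (fst z) * g z \<partial>\<zeta>)"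
    if A: "A \<in> sets borel" and g: "g \<in> borel_measurable \<zeta>" "\<And>z. g z \<ge> 0" and gi: "integrable \<zeta> (\<lambda>z. indicator A (fst z) * g z)" for A g
  proof -
    have set: "fst -` A \<inter> space \<zeta> \<in> sets \<zeta>" using measurable_sets[OF mfst A] .
    have "emeasure (distr (density \<zeta> (\<lambda>z. ennreal (g z))) borel fst) A
        = emeasure (density \<zeta> (\<lambda>z. ennreal (g z))) (fst -` A \<inter> space \<zeta>)"
      using mfst A by (subst emeasure_distr) auto
    also have "\<dots> = (\<integral>\<^sup>+z\<in>(fst -` A \<inter> space \<zeta>). ennreal (g z) \<partial>\<zeta>)"
      using set g by (subst emeasure_density) auto
    also have "\<dots> = (\<integral>\<^sup>+z. ennreal (indicator A (fst z) * g z) \<partial>\<zeta>)"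
      by (intro nn_integral_cong) (auto simp: indicator_def sp)
    also have "\<dots> = ennreal (\<integral>z. indicator A (fst z) * g z \<partial>\<zeta>)"
      using gi g by (intro nn_integral_eq_integral) auto
    finally show ?thesis .
  qed
  have "M1 = M2"
  proof (rule measure_eqI)
    show "sets M1 = sets M2" unfolding M1_def M2_def by simp
    fix A assume "A \<in> sets M1"
    hence A: "A \<in> sets borel" unfolding M1_def by simp
    have "(\<integral>z. indicator A (fst z) * mp z \<partial>\<zeta>) - (\<integral>z. indicator A (fst z) * mn z \<partial>\<zeta>)
        = (\<integral>z. indicator A (fst z) * mp z - indicator A (fst z) * mn z \<partial>\<zeta>)"
      using Bochner_Integration.integral_diff[OF ii[OF A]] by simp
    also have "\<dots> = (\<integral>z. indicator A (fst z) * mm z \<partial>\<zeta>)"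
      by (intro Bochner_Integration.integral_cong) (auto simp: mp_def mn_def algebra_simps max_def)
    also have "\<dots> = 0" using ind0[OF A] .
    finally have eq: "(\<integral>z. indicator A (fst z) * mp z \<partial>\<zeta>) = (\<integral>z. indicator A (fst z) * mn z \<partial>\<zeta>)" by simp
    show "emeasure M1 A = emeasure M2 A" unfolding M1_def M2_def
      using em[OF A mpm(1) _ ii(1)[OF A]] em[OF A mpm(2) _ ii(2)[OF A]] eq
      by (simp add: mp_def mn_def)
  qed
  have intM: "integral\<^sup>L (distr (density \<zeta> (\<lambda>z. ennreal (g z))) borel fst) h = (\<integral>z. g z * h (fst z) \<partial>\<zeta>)"
    if g: "g \<in> borel_measurable \<zeta>" "\<And>z. g z \<ge> 0" for g
  proof -
    have "integral\<^sup>L (distr (density \<zeta> (\<lambda>z. ennreal (g z))) borel fst) h = integral\<^sup>L (density \<zeta> (\<lambda>z. ennreal (g z))) (\<lambda>z. h (fst z))"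
      using mfst h by (intro integral_distr) auto
    also have "\<dots> = (\<integral>z. g z *\<^sub>R h (fst z) \<partial>\<zeta>)"
      using hfst g by (intro integral_density) auto
    finally show ?thesis by simp
  qed
  have "(\<integral>z. mp z * h (fst z) \<partial>\<zeta>) = (\<integral>z. mn z * h (fst z) \<partial>\<zeta>)"
    using intM[of mp] intM[of mn] mpm \<open>M1 = M2\<close> unfolding M1_def M2_def by (simp add: mp_def mn_def)
  moreover have "integrable \<zeta> (\<lambda>z. g z * h (fst z))"
    if g: "g \<in> borel_measurable \<zeta>" "\<And>z. \<bar>g z\<bar> \<le> \<bar>mm z\<bar>" for g
  proof (rule Bochner_Integration.integrable_bound[OF hi])
    show "(\<lambda>z. g z * h (fst z)) \<in> borel_measurable \<zeta>" using g(1) hfst by (rule borel_measurable_times)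
    show "AE z in \<zeta>. norm (g z * h (fst z)) \<le> norm (h (fst z) * mm z)"
    proof (rule AE_I2)
      fix z
      have "\<bar>g z\<bar> * \<bar>h (fst z)\<bar> \<le> \<bar>mm z\<bar> * \<bar>h (fst z)\<bar>" using g(2) by (rule mult_right_mono) simp
      thus "norm (g z * h (fst z)) \<le> norm (h (fst z) * mm z)" by (simp add: abs_mult mult.commute)
    qed
  qed
  hence "integrable \<zeta> (\<lambda>z. mp z * h (fst z))" "integrable \<zeta> (\<lambda>z. mn z * h (fst z))"
    using mpm unfolding mp_def mn_def by auto
  ultimately have "(\<integral>z. mp z * h (fst z) - mn z * h (fst z) \<partial>\<zeta>) = 0" by simp
  moreover have "(\<lambda>z. mp z * h (fst z) - mn z * h (fst z)) = (\<lambda>z. h (fst z) * mm z)"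
    by (auto simp: mp_def mn_def max_def algebra_simps)
  ultimately show ?thesis by simp
qed

lemma enn_fin: "A \<noteq> \<infinity> \<Longrightarrow> enn2ereal A = ereal (enn2real A)"
  by (metis enn2ereal_ennreal enn2real_nonneg ennreal_enn2real top.not_eq_extremum infinity_ennreal_def)

lemma extint_le:
  fixes \<zeta> :: "(pt \<times> pt) measure" and \<phi> :: "pt \<Rightarrow> ereal"
  assumes S: "sets \<zeta> = sets borel" and phim: "\<phi> \<in> borel_measurable borel"
    and gi: "integrable \<zeta> g" and le: "\<And>z. \<phi> (snd z) \<le> ereal (g z)"
  shows "ext_integral (distr \<zeta> borel snd) \<phi> \<le> ereal (\<integral>z. g z \<partial>\<zeta>)"
proof -
  note phim[measurable]
  have msnd: "(snd :: pt \<times> pt \<Rightarrow> pt) \<in> \<zeta> \<rightarrow>\<^sub>M borel" by (subst measurable_cong_sets[OF S refl]) (rule snd_meas)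
  have m1: "(\<lambda>y. e2ennreal (\<phi> y)) \<in> borel_measurable (distr \<zeta> borel snd)"
    by (subst measurable_cong_sets[of _ borel]) auto
  have m2: "(\<lambda>y. e2ennreal (- \<phi> y)) \<in> borel_measurable (distr \<zeta> borel snd)"
    by (subst measurable_cong_sets[of _ borel]) auto
  have e1: "(\<integral>\<^sup>+y. e2ennreal (\<phi> y) \<partial>distr \<zeta> borel snd) = (\<integral>\<^sup>+z. e2ennreal (\<phi> (snd z)) \<partial>\<zeta>)"
    by (rule nn_integral_distr[OF msnd m1])
  have e2: "(\<integral>\<^sup>+y. e2ennreal (- \<phi> y) \<partial>distr \<zeta> borel snd) = (\<integral>\<^sup>+z. e2ennreal (- \<phi> (snd z)) \<partial>\<zeta>)"
    by (rule nn_integral_distr[OF msnd m2])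
  define A where "A = (\<integral>\<^sup>+z. ennreal (g z) \<partial>\<zeta>)"
  define B where "B = (\<integral>\<^sup>+z. ennreal (- g z) \<partial>\<zeta>)"
  have a: "(\<integral>\<^sup>+z. e2ennreal (\<phi> (snd z)) \<partial>\<zeta>) \<le> A" unfolding A_def
    by (rule nn_integral_mono) (metis e2ennreal_mono le e2ennreal_ereal)
  have b: "B \<le> (\<integral>\<^sup>+z. e2ennreal (- \<phi> (snd z)) \<partial>\<zeta>)" unfolding B_def
  proof (rule nn_integral_mono)
    fix z
    have "- ereal (g z) \<le> - \<phi> (snd z)" using le[of z] by (simp only: ereal_minus_le_minus)
    hence "- \<phi> (snd z) \<ge> ereal (- g z)" by simp
    thus "ennreal (- g z) \<le> e2ennreal (- \<phi> (snd z))" by (metis e2ennreal_mono e2ennreal_ereal)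
  qed
  have Af: "A \<noteq> \<infinity>" and Bf: "B \<noteq> \<infinity>" unfolding A_def B_def using integrableD(2,3)[OF gi] by auto
  have "ext_integral (distr \<zeta> borel snd) \<phi>
      = enn2ereal (\<integral>\<^sup>+z. e2ennreal (\<phi> (snd z)) \<partial>\<zeta>) - enn2ereal (\<integral>\<^sup>+z. e2ennreal (- \<phi> (snd z)) \<partial>\<zeta>)"
    unfolding ext_integral_def e1 e2 ..
  also have "\<dots> \<le> enn2ereal A - enn2ereal B"
    using a b by (intro ereal_minus_mono) (simp_all add: less_eq_ennreal.rep_eq[symmetric])
  also have "\<dots> = ereal (enn2real A - enn2real B)" using enn_fin[OF Af] enn_fin[OF Bf] by simp
  also have "\<dots> = ereal (\<integral>z. g z \<partial>\<zeta>)" unfolding A_def B_def real_lebesgue_integral_def[OF gi] ..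
  finally show ?thesis .
qed

lemma dlt_meas: "1-lipschitz_on UNIV f \<Longrightarrow> dlt f \<in> borel_measurable borel"
  by (rule cont_meas[OF dlt_cont])

lemma dfst_meas: assumes "1-lipschitz_on UNIV f" shows "(\<lambda>z::pt\<times>pt. dlt f (fst z)) \<in> borel_measurable borel"
  using measurable_compose[OF fst_meas dlt_meas[OF assms]] by simp

lemma int_cost: "P2 (\<zeta> :: (pt \<times> pt) measure) \<Longrightarrow> integrable \<zeta> (\<lambda>z. cost (fst z) (snd z))"
proof (rule P2_int)
  show "(\<lambda>z. cost (fst z) (snd z)) \<in> borel_measurable borel"
    by (rule cont_meas) (unfold cost_def, intro continuous_intros)
  fix z :: "pt \<times> pt"
  have "\<bar>fst (fst z) - fst (snd z)\<bar> \<le> 0 + 2 * norm z" "\<bar>snd (fst z) - snd (snd z)\<bar> \<le> 0 + 2 * norm z"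
    using comp_le[of z] by linarith+
  from prod_bound[OF this] show "norm (cost (fst z) (snd z)) \<le> 4 * (1 + (norm z)^2)"
    unfolding cost_def by simp
qed

lemma int_costr: "P2 (\<zeta> :: (pt \<times> pt) measure) \<Longrightarrow> integrable \<zeta> (\<lambda>z. cost r (snd z))"
proof (rule P2_int)
  show "(\<lambda>z::pt\<times>pt. cost r (snd z)) \<in> borel_measurable borel"
    by (rule cont_meas) (unfold cost_def, intro continuous_intros)
  fix z :: "pt \<times> pt"
  have "\<bar>fst r - fst (snd z)\<bar> \<le> \<bar>fst r\<bar> + 1 * norm z" "\<bar>snd r - snd (snd z)\<bar> \<le> \<bar>snd r\<bar> + 1 * norm z"
    using comp_le[of z] by linarith+
  from prod_bound[OF this] show "norm (cost r (snd z)) \<le> (\<bar>fst r\<bar> + 1) * (\<bar>snd r\<bar> + 1) * (1 + (norm z)^2)"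
    unfolding cost_def by simp
qed

lemma dlt_bound2: "1-lipschitz_on UNIV f \<Longrightarrow> \<bar>dlt f (fst (z::pt\<times>pt))\<bar> \<le> \<bar>f 0\<bar> + 2 * norm z"
  using dlt_bound[of f "fst z"] comp_le[of z] by linarith

lemma int_d2: fixes \<zeta> :: "(pt \<times> pt) measure" assumes "P2 \<zeta>" "1-lipschitz_on UNIV f"
  shows "integrable \<zeta> (\<lambda>z. (dlt f (fst z))^2)"
proof (rule P2_int[OF assms(1)])
  show "(\<lambda>z::pt\<times>pt. (dlt f (fst z))^2) \<in> borel_measurable borel"
    by (rule borel_measurable_power[OF dfst_meas[OF assms(2)]])
  fix z :: "pt \<times> pt"
  from prod_bound[OF dlt_bound2[OF assms(2)] dlt_bound2[OF assms(2)]]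
  show "norm ((dlt f (fst z))^2) \<le> (\<bar>f 0\<bar> + 2) * (\<bar>f 0\<bar> + 2) * (1 + (norm z)^2)"
    by (simp add: power2_eq_square)
qed

lemma int_dm: fixes \<zeta> :: "(pt \<times> pt) measure" assumes "P2 \<zeta>" "1-lipschitz_on UNIV f"
  shows "integrable \<zeta> (\<lambda>z. dlt f (fst z) * mm z)"
proof (rule P2_int[OF assms(1)])
  show "(\<lambda>z::pt\<times>pt. dlt f (fst z) * mm z) \<in> borel_measurable borel"
    by (rule borel_measurable_times[OF dfst_meas[OF assms(2)] mm_meas])
  fix z :: "pt \<times> pt"
  from prod_bound[OF dlt_bound2[OF assms(2)] mm_bound]
  show "norm (dlt f (fst z) * mm z) \<le> (\<bar>f 0\<bar> + 2) * (0 + 4) * (1 + (norm z)^2)"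
    by simp
qed

lemma key:
  assumes lip: "1-lipschitz_on UNIV f" and G: "G = {p. snd p - fst p = f (fst p + snd p)}"
    and Z: "\<zeta> \<in> Gamma \<nu>" and ki: "integrable \<zeta> k"
    and kle: "\<And>z. phi G (snd z) \<le> ereal (cost (rr f (fst z)) (snd z) - k z)"
  shows "ext_integral \<nu> (phi G) \<le> ereal ((\<integral>z. cost (fst z) (snd z) \<partial>\<zeta>) - (\<integral>z. (dlt f (fst z))^2 \<partial>\<zeta>) - (\<integral>z. k z \<partial>\<zeta>))"
proof -
  note GD = Gamma_D[OF Z]
  have eqg: "cost (rr f (fst z)) (snd z) - k z = cost (fst z) (snd z) - (dlt f (fst z))^2 + dlt f (fst z) * mm z - k z" for z
    using cost_rr[of f "fst z" "snd z"] by simp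
  have i1: "integrable \<zeta> (\<lambda>z. cost (fst z) (snd z))" by (rule int_cost[OF GD(1)])
  have i2: "integrable \<zeta> (\<lambda>z. (dlt f (fst z))^2)" by (rule int_d2[OF GD(1) lip])
  have i3: "integrable \<zeta> (\<lambda>z. dlt f (fst z) * mm z)" by (rule int_dm[OF GD(1) lip])
  have gi: "integrable \<zeta> (\<lambda>z. cost (fst z) (snd z) - (dlt f (fst z))^2 + dlt f (fst z) * mm z - k z)"
    using i1 i2 i3 ki by auto
  have "ext_integral \<nu> (phi G) \<le> ereal (\<integral>z. cost (fst z) (snd z) - (dlt f (fst z))^2 + dlt f (fst z) * mm z - k z \<partial>\<zeta>)"
    unfolding GD(5)[symmetric]
    by (rule extint_le[OF GD(3) phi_meas[OF lip G] gi]) (use kle eqg in metis)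
  also have "(\<integral>z. cost (fst z) (snd z) - (dlt f (fst z))^2 + dlt f (fst z) * mm z - k z \<partial>\<zeta>)
      = (\<integral>z. cost (fst z) (snd z) \<partial>\<zeta>) - (\<integral>z. (dlt f (fst z))^2 \<partial>\<zeta>) + (\<integral>z. dlt f (fst z) * mm z \<partial>\<zeta>) - (\<integral>z. k z \<partial>\<zeta>)"
    using i1 i2 i3 ki by simp
  also have "(\<integral>z. dlt f (fst z) * mm z \<partial>\<zeta>) = 0" by (rule mart[OF Z dlt_meas[OF lip] i3])
  finally show ?thesis by simp
qed

theorem lemma8:
  fixes \<nu> :: "pt measure" and \<gamma> :: "(pt \<times> pt) measure" and G :: "pt set"
  assumes "P2 \<nu>"
    and "\<gamma> \<in> Gamma \<nu>"
    and "maximal_monotone G"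
    and "ereal (\<integral>z. cost (fst z) (snd z) \<partial>\<gamma>) \<le> ext_integral \<nu> (phi G)"
  shows "ereal (\<integral>z. cost (fst z) (snd z) \<partial>\<gamma>) = ext_integral \<nu> (phi G)
    \<and> (\<forall>\<zeta>\<in>Gamma \<nu>. (\<integral>z. cost (fst z) (snd z) \<partial>\<gamma>) \<le> (\<integral>z. cost (fst z) (snd z) \<partial>\<zeta>))
    \<and> msupport (distr \<gamma> borel fst) \<subseteq> G
    \<and> (\<forall>(x, y) \<in> msupport \<gamma>. ereal (cost x y) = phi G y \<and>
           (\<exists>r\<in>G. (\<forall>s\<in>G. cost r y \<le> cost s y) \<and> cost r y = cost x y))"
proof -
  obtain f where lip: "1-lipschitz_on UNIV f" and G: "G = {p. snd p - fst p = f (fst p + snd p)}"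
    using maxmono_struct[OF assms(3)] by blast
  note GD = Gamma_D[OF assms(2)]
  define C where "C = (\<integral>z. cost (fst z) (snd z) \<partial>\<gamma>)"
  define D where "D = (\<integral>z. (dlt f (fst z))^2 \<partial>\<gamma>)"
  define E where "E = ext_integral \<nu> (phi G)"
  have phile: "phi G y \<le> ereal (cost r y)" if "r \<in> G" for r y
    unfolding phi_def by (rule INF_lower[OF that])
  have kle0: "phi G (snd z) \<le> ereal (cost (rr f (fst z)) (snd z) - 0)" for z :: "pt \<times> pt"
    using phile[OF rr_in[OF G]] by simp
  have key0: "ext_integral \<nu> (phi G) \<le> ereal ((\<integral>z. cost (fst z) (snd z) \<partial>\<zeta>) - (\<integral>z. (dlt f (fst z))^2 \<partial>\<zeta>))"
    if Z: "\<zeta> \<in> Gamma \<nu>" for \<zeta>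
    using key[OF lip G Z _ kle0] by simp
  have Dnn: "D \<ge> 0" unfolding D_def by (rule integral_nonneg_AE) simp
  have "ereal C \<le> E" using assms(4) unfolding C_def E_def .
  moreover have "E \<le> ereal (C - D)" using key0[OF assms(2)] unfolding C_def D_def E_def .
  ultimately have "ereal C \<le> ereal (C - D)" by (rule order.trans)
  hence "C \<le> C - D" by simp
  hence D0: "D = 0" using Dnn by linarith
  have CE: "ereal C = E" using \<open>ereal C \<le> E\<close> \<open>E \<le> ereal (C - D)\<close> D0 by (auto intro: antisym)
  have AEd: "AE z in \<gamma>. dlt f (fst z) = 0"
  proof -
    have "AE z in \<gamma>. (dlt f (fst z))^2 = 0"
      using integral_nonneg_eq_0_iff_AE[OF int_d2[OF GD(1) lip]] D0 unfolding D_def by simp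
    thus ?thesis by simp
  qed
  have S: "sets \<gamma> = sets borel" and sp: "space \<gamma> = UNIV" using GD by auto
  have dcont: "continuous_on UNIV (dlt f)" by (rule dlt_cont[OF lip])
  have dfcont: "continuous_on UNIV (\<lambda>z::pt\<times>pt. dlt f (fst z))"
    using continuous_on_compose2[OF dcont continuous_on_fst[OF continuous_on_id]] by simp
  have null0: "emeasure \<gamma> {z. dlt f (fst z) \<noteq> 0} = 0"
  proof -
    have s1: "{z. dlt f (fst z) \<noteq> 0} \<in> sets \<gamma>" unfolding S
      by (rule borel_open, rule open_Collect_neq[OF dfcont continuous_on_const])
    have s2: "{z \<in> space \<gamma>. \<not> dlt f (fst z) = 0} = {z. dlt f (fst z) \<noteq> 0}" using sp by auto
    show ?thesis using AE_iff_measurable[OF s1 s2] AEd by simp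
  qed
  have inG: "x \<in> G \<longleftrightarrow> dlt f x = 0" for x using G_dlt[OF G] by blast
  have P1: "ereal C = E" by (rule CE)
  have P2: "C \<le> (\<integral>z. cost (fst z) (snd z) \<partial>\<zeta>)" if Z: "\<zeta> \<in> Gamma \<nu>" for \<zeta>
  proof -
    have "0 \<le> (\<integral>z. (dlt f (fst z))^2 \<partial>\<zeta>)" by (rule integral_nonneg_AE) simp
    moreover have "ereal C \<le> ereal ((\<integral>z. cost (fst z) (snd z) \<partial>\<zeta>) - (\<integral>z. (dlt f (fst z))^2 \<partial>\<zeta>))"
      using key0[OF Z] CE unfolding E_def by simp
    hence "C \<le> (\<integral>z. cost (fst z) (snd z) \<partial>\<zeta>) - (\<integral>z. (dlt f (fst z))^2 \<partial>\<zeta>)" by simp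
    ultimately show ?thesis by linarith
  qed
  have P3: "msupport (distr \<gamma> borel fst) \<subseteq> G"
  proof
    fix x assume x: "x \<in> msupport (distr \<gamma> borel fst)"
    show "x \<in> G"
    proof (rule ccontr)
      assume "x \<notin> G"
      hence dx: "dlt f x \<noteq> 0" using inG by blast
      have U: "open {p. dlt f p \<noteq> 0}" by (rule open_Collect_neq[OF dcont continuous_on_const])
      hence pos: "emeasure (distr \<gamma> borel fst) {p. dlt f p \<noteq> 0} > 0"
        using x dx unfolding msupport_def by blast
      have mfst: "(fst :: pt \<times> pt \<Rightarrow> pt) \<in> \<gamma> \<rightarrow>\<^sub>M borel" by (subst measurable_cong_sets[OF S refl]) (rule fst_meas)
      have "emeasure (distr \<gamma> borel fst) {p. dlt f p \<noteq> 0} = emeasure \<gamma> (fst -` {p. dlt f p \<noteq> 0} \<inter> space \<gamma>)"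
        using U by (intro emeasure_distr[OF mfst]) (rule borel_open)
      also have "fst -` {p. dlt f p \<noteq> 0} \<inter> space \<gamma> = {z. dlt f (fst z) \<noteq> 0}" using sp by auto
      finally show False using pos null0 by simp
    qed
  qed
  have P4: "ereal (cost x y) = phi G y \<and> (\<exists>r\<in>G. (\<forall>s\<in>G. cost r y \<le> cost s y) \<and> cost r y = cost x y)"
    if xy: "(x, y) \<in> msupport \<gamma>" for x y
  proof -
    have xG: "x \<in> G"
    proof (rule ccontr)
      assume "x \<notin> G"
      hence "dlt f (fst (x,y)) \<noteq> 0" using inG by simp
      moreover have "open {z::pt\<times>pt. dlt f (fst z) \<noteq> 0}" by (rule open_Collect_neq[OF dfcont continuous_on_const])
      ultimately have "emeasure \<gamma> {z. dlt f (fst z) \<noteq> 0} > 0" using xy unfolding msupport_def by blast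
      thus False using null0 by simp
    qed
    have eq: "ereal (cost x y) = phi G y"
    proof (rule ccontr)
      assume "ereal (cost x y) \<noteq> phi G y"
      hence "phi G y < ereal (cost x y)" using phile[OF xG, of y] by simp
      then obtain r where rG: "r \<in> G" and rl: "ereal (cost r y) < ereal (cost x y)"
        unfolding phi_def by (auto simp: INF_less_iff)
      define W where "W = {z::pt\<times>pt. cost r (snd z) < cost (fst z) (snd z)}"
      define V where "V = {z::pt\<times>pt. dlt f (fst z) = 0}"
      have Wo: "open W" unfolding W_def cost_def by (intro open_Collect_less continuous_intros)
      have Vc: "closed V" unfolding V_def by (rule closed_Collect_eq[OF dfcont continuous_on_const])
      have WVs: "W \<inter> V \<in> sets \<gamma>" unfolding S using Wo Vc by auto
      define k where "k z = (cost (fst z) (snd z) - cost r (snd z)) * indicator (W \<inter> V) z" for z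
      have ki: "integrable \<gamma> k" unfolding k_def
        by (intro integrable_real_mult_indicator WVs Bochner_Integration.integrable_diff int_cost int_costr GD(1))
      have knn: "k z \<ge> 0" for z unfolding k_def W_def by (auto simp: indicator_def)
      have kle: "phi G (snd z) \<le> ereal (cost (rr f (fst z)) (snd z) - k z)" for z
      proof (cases "z \<in> W \<inter> V")
        case True
        hence "rr f (fst z) = fst z" unfolding V_def rr_def by simp
        hence "cost (rr f (fst z)) (snd z) - k z = cost r (snd z)" using True unfolding k_def by simp
        thus ?thesis using phile[OF rG] by simp
      next
        case False
        thus ?thesis using phile[OF rr_in[OF G]] unfolding k_def by simp
      qed
      have "E \<le> ereal (C - D - (\<integral>z. k z \<partial>\<gamma>))" using key[OF lip G assms(2) ki kle] unfolding C_def D_def E_def .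
      hence "ereal C \<le> ereal (C - D - (\<integral>z. k z \<partial>\<gamma>))" using CE by simp
      hence "(\<integral>z. k z \<partial>\<gamma>) \<le> 0" using D0 by simp
      moreover have "(\<integral>z. k z \<partial>\<gamma>) \<ge> 0" using knn by (intro integral_nonneg_AE) simp
      ultimately have "(\<integral>z. k z \<partial>\<gamma>) = 0" by simp
      hence "AE z in \<gamma>. k z = 0" using integral_nonneg_eq_0_iff_AE[OF ki] knn by simp
      moreover have "k z \<noteq> 0" if "z \<in> W \<inter> V" for z using that unfolding k_def W_def by simp
      ultimately have "AE z in \<gamma>. z \<notin> W \<inter> V" by (auto elim: AE_mp)
      hence "AE z in \<gamma>. z \<notin> W" using AEd unfolding V_def by (auto elim: AE_mp)
      moreover have "W \<in> sets \<gamma>" unfolding S using Wo by auto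
      ultimately have "emeasure \<gamma> W = 0" using AE_iff_measurable[of W \<gamma> "\<lambda>z. z \<notin> W"] sp by auto
      moreover have "(x,y) \<in> W" unfolding W_def using rl by simp
      ultimately show False using xy Wo unfolding msupport_def by fastforce
    qed
    moreover have "\<forall>s\<in>G. cost x y \<le> cost s y"
      using eq phile by (metis ereal_less_eq(3))
    ultimately show ?thesis using xG by blast
  qed
  show ?thesis using P1 P2 P3 P4 unfolding C_def E_def by auto
qed

end
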